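(* Let $E$ and $X$ be Banach spaces and let $U$ be a homeomorphism from $E$ onto $X$ whose inverse $U^{-1}$ is uniformly continuous. Let $b>0$, $d>0$ and let $E_0$ be a closed linear subspace of finite codimension in $E$. If $d>\omega(U^{-1},b)$, then there exists a compact subset $K$ of $X$ such that $$bB_X\subset K+U(2d\,B_{E_0}).$$
   Context: $B_Z$ denotes the open unit ball of a Banach space $Z$. For a uniformly continuous map $V$ between Banach spaces and $t>0$, $\omega(V,t)=\sup\{\|Vx_1-Vx_2\|: \|x_1-x_2\|\le t\}$ is its modulus of uniform continuity. *)

theory Defs
  imports "HOL-Analysis.Analysis"
begin

definition modulus_uc :: "('a::real_normed_vector \<Rightarrow> 'b::real_normed_vector) \<Rightarrow> real \<Rightarrow> real" where
  "modulus_uc V t = Sup {norm (V x1 - V x2) | x1 x2. norm (x1 - x2) \<le> t}"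

definition finite_codim :: "'a::real_vector set \<Rightarrow> bool" where
  "finite_codim S \<longleftrightarrow> (\<exists>F. finite F \<and> span (S \<union> F) = UNIV)"

end

theory Submission
  imports Defs "HOL-Homology.Homology"
begin


lemma hw_canon: "homotopic_with_canon (\<lambda>x. True) S T f g \<longleftrightarrow> (\<exists>h. continuous_on ({0..1::real} \<times> S) h \<and> h ` ({0..1::real} \<times> S) \<subseteq> T \<and> (\<forall>x\<in>S. h(0,x) = f x) \<and> (\<forall>x\<in>S. h(1,x) = g x))"
  apply (subst homotopic_with) apply simp
  apply (simp add: prod_topology_subtopology continuous_map_in_subtopology subtopology_subtopology Times_Int_Times image_subset_iff_funcset)
  done

definition sqn :: "nat \<Rightarrow> (nat \<Rightarrow> real) \<Rightarrow> real" where
  "sqn n x = (\<Sum>i<n. (x i)^2)"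
definition nz :: "nat \<Rightarrow> (nat \<Rightarrow> real) \<Rightarrow> (nat \<Rightarrow> real)" where
  "nz n y = (\<lambda>i. y i / sqrt (sqn n y))"
definition Bn :: "nat \<Rightarrow> (nat \<Rightarrow> real) set" where
  "Bn n = {x. (\<forall>i\<ge>n. x i = 0) \<and> sqn n x \<le> 1}"
definition Sn :: "nat \<Rightarrow> (nat \<Rightarrow> real) set" where
  "Sn n = {x. (\<forall>i\<ge>n. x i = 0) \<and> sqn n x = 1}"

lemma sqn_nonneg: "sqn n x \<ge> 0"
  unfolding sqn_def by (simp add: sum_nonneg)

lemma sqn_zero: "sqn n x = 0 \<longleftrightarrow> (\<forall>i<n. x i = 0)"
  unfolding sqn_def by (subst sum_nonneg_eq_0_iff) auto

lemma sqn_scale: "sqn n (\<lambda>i. c * x i) = c^2 * sqn n x"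
  unfolding sqn_def by (simp add: sum_distrib_left power_mult_distrib)

lemma nz_in:
  assumes "\<forall>i\<ge>n. y i = 0" "sqn n y \<noteq> 0"
  shows "nz n y \<in> Sn n"
proof -
  have p: "sqn n y > 0" using assms(2) sqn_nonneg[of n y] by linarith
  have "sqn n (nz n y) = (\<Sum>i<n. (y i)^2 / sqn n y)"
    unfolding sqn_def nz_def by (simp add: power_divide p[unfolded sqn_def] less_imp_le)
  also have "\<dots> = 1" using p unfolding sqn_def by (simp add: sum_divide_distrib[symmetric])
  finally show ?thesis using assms(1) unfolding Sn_def nz_def by auto
qed

lemma nz_id: "x \<in> Sn n \<Longrightarrow> nz n x = x"
  unfolding Sn_def nz_def by auto

lemma coord: "continuous_on A f \<Longrightarrow> continuous_on A (\<lambda>a. f a i)"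
  by (rule continuous_on_product_then_coordinatewise)

lemma coord_snd: "continuous_on A (\<lambda>p. (snd p :: nat \<Rightarrow> real) i)"
  using coord[OF continuous_on_snd[OF continuous_on_id], of A i] by simp

lemma sqn_scale_le: "0 \<le> s \<Longrightarrow> s \<le> 1 \<Longrightarrow> sqn n x = 1 \<Longrightarrow> sqn n (\<lambda>j. (1 - s) * x j) \<le> 1"
  using sqn_scale[of n "1-s" x] by (simp add: power_le_one)

lemma cont_sqn: "continuous_on A f \<Longrightarrow> continuous_on A (\<lambda>a. sqn n (f a))"
  unfolding sqn_def
  by (rule continuous_on_sum, rule continuous_on_power, erule coord)

lemma cont_nz:
  assumes "continuous_on A f" "\<And>a. a \<in> A \<Longrightarrow> sqn n (f a) \<noteq> 0"
  shows "continuous_on A (\<lambda>a. nz n (f a))"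
  unfolding nz_def
proof (rule continuous_on_coordinatewise_then_product, rule continuous_on_divide)
  fix i show "continuous_on A (\<lambda>a. f a i)"
    by (rule coord[OF assms(1)])
  show "continuous_on A (\<lambda>a. sqrt (sqn n (f a)))"
    by (rule continuous_on_real_sqrt, rule cont_sqn, rule assms(1))
  show "\<forall>a\<in>A. sqrt (sqn n (f a)) \<noteq> 0" using assms(2) by simp
qed

lemma brouwer_nat:
  assumes hc: "continuous_on (Bn n) h" and hi: "h ` Bn n \<subseteq> Bn n"
  shows "\<exists>x\<in>Bn n. h x = x"
proof (rule ccontr)
  assume "\<not> ?thesis"
  hence nf: "\<And>x. x \<in> Bn n \<Longrightarrow> h x \<noteq> x" by blast
  show False
  proof (cases n)
    case 0
    have z: "(\<lambda>i. 0::real) \<in> Bn n" unfolding Bn_def sqn_def by simp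
    have "\<And>x. x \<in> Bn n \<Longrightarrow> x = (\<lambda>i. 0)" unfolding Bn_def using 0 by auto
    then show False using nf[OF z] hi z by blast
  next
    case (Suc m)
    have SB: "Sn n \<subseteq> Bn n" unfolding Sn_def Bn_def by auto
    have hB: "x \<in> Bn n \<Longrightarrow> h x \<in> Bn n" for x using hi by blast
    define H1 where "H1 = (\<lambda>(t::real,x). nz n (\<lambda>i. x i - t * h x i))"
    define g1 where "g1 = (\<lambda>x. nz n (\<lambda>i. x i - h x i))"
    define H2 where "H2 = (\<lambda>(s::real,x::nat\<Rightarrow>real). nz n (\<lambda>i. (1-s) * x i - h (\<lambda>j. (1-s) * x j) i))"
    have ne1: "sqn n (\<lambda>i. x i - t * h x i) \<noteq> 0" if "t \<in> {0..1}" "x \<in> Sn n" for t x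
    proof
      assume "sqn n (\<lambda>i. x i - t * h x i) = 0"
      hence e: "\<forall>i<n. x i = t * h x i" unfolding sqn_zero by auto
      have hx: "h x \<in> Bn n" using hB SB that(2) by auto
      have "1 = sqn n x" using that(2) unfolding Sn_def by auto
      also have "\<dots> = sqn n (\<lambda>i. t * h x i)" unfolding sqn_def using e by auto
      also have "\<dots> = t^2 * sqn n (h x)" by (rule sqn_scale)
      also have "\<dots> \<le> t^2" using hx unfolding Bn_def
        by (simp add: mult_left_le)
      finally have t1: "1 \<le> t^2" .
      have "t * t \<le> t" using that(1) by (intro mult_left_le) auto
      hence "t = 1" using t1 that(1) by (simp add: power2_eq_square)
      have "h x = x"
      proof
        fix i show "h x i = x i"
        proof (cases "i < n")
          case True thus ?thesis using e \<open>t = 1\<close> by simp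
        next
          case False thus ?thesis using hx that(2) unfolding Bn_def Sn_def by simp
        qed
      qed
      thus False using nf that(2) SB by blast
    qed
    have ne2: "sqn n (\<lambda>i. (1-s) * x i - h (\<lambda>j. (1-s) * x j) i) \<noteq> 0" if "s \<in> {0..1}" "x \<in> Sn n" for s x
    proof
      assume "sqn n (\<lambda>i. (1-s) * x i - h (\<lambda>j. (1-s) * x j) i) = 0"
      hence e: "\<forall>i<n. (1-s) * x i = h (\<lambda>j. (1-s) * x j) i" unfolding sqn_zero by auto
      have zB: "(\<lambda>j. (1-s) * x j) \<in> Bn n"
        using that unfolding Bn_def Sn_def by (auto simp: sqn_scale_le)
      hence "h (\<lambda>j. (1-s) * x j) \<in> Bn n" using hB by blast
      hence hz: "h (\<lambda>j. (1-s) * x j) \<in> Bn n" .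
      have "h (\<lambda>j. (1-s) * x j) = (\<lambda>j. (1-s) * x j)"
      proof
        fix i show "h (\<lambda>j. (1-s) * x j) i = (1-s) * x i"
        proof (cases "i < n")
          case True thus ?thesis using e by simp
        next
          case False thus ?thesis using hz zB unfolding Bn_def by simp
        qed
      qed
      thus False using nf zB by blast
    qed
    have cth: "contractible (Sn n)"
      unfolding contractible_def
    proof (rule exI, rule homotopic_with_trans)
      show "homotopic_with_canon (\<lambda>x. True) (Sn n) (Sn n) id g1"
        unfolding hw_canon
      proof (intro exI conjI ballI)
        show "continuous_on ({0..1} \<times> Sn n) H1"
          unfolding H1_def split_def
        proof (rule cont_nz)
          have "continuous_on ({0..1} \<times> Sn n) (\<lambda>p. h (snd p))"
            by (rule continuous_on_compose2[OF hc continuous_on_snd]) (use SB in auto)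
          then have "\<And>i. continuous_on ({0..1} \<times> Sn n) (\<lambda>p. h (snd p) i)" by (rule coord)
          then show "continuous_on ({0..1} \<times> Sn n) (\<lambda>a. \<lambda>i. snd a i - fst a * h (snd a) i)"
            by (intro continuous_on_coordinatewise_then_product continuous_intros coord_snd)
          show "\<And>a. a \<in> {0..1} \<times> Sn n \<Longrightarrow> sqn n (\<lambda>i. snd a i - fst a * h (snd a) i) \<noteq> 0"
            using ne1 by auto
        qed
        show "H1 ` ({0..1} \<times> Sn n) \<subseteq> Sn n"
        proof clarify
          fix t x assume tx: "t \<in> {0..1::real}" "x \<in> Sn n"
          moreover have "h x \<in> Bn n" using hB SB \<open>x \<in> Sn n\<close> by auto
          ultimately show "H1 (t, x) \<in> Sn n" unfolding H1_def prod.case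
            by (intro nz_in ne1[OF tx]) (auto simp: Sn_def Bn_def)
        qed
        show "H1 (0, x) = id x" if "x \<in> Sn n" for x using that nz_id by (simp add: H1_def)
        show "H1 (1, x) = g1 x" if "x \<in> Sn n" for x by (simp add: H1_def g1_def)
      qed
      show "homotopic_with_canon (\<lambda>x. True) (Sn n) (Sn n) g1 (\<lambda>x. nz n (\<lambda>i. 0 - h (\<lambda>j. 0) i))"
        unfolding hw_canon
      proof (intro exI conjI ballI)
        show "continuous_on ({0..1} \<times> Sn n) H2"
          unfolding H2_def split_def
        proof (rule cont_nz)
          have c0: "continuous_on ({0..1} \<times> Sn n) (\<lambda>p. (\<lambda>j. (1 - fst p) * snd p j))"
            by (intro continuous_on_coordinatewise_then_product continuous_intros coord_snd)
          have "continuous_on ({0..1} \<times> Sn n) (\<lambda>p. h (\<lambda>j. (1 - fst p) * snd p j))"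
            by (rule continuous_on_compose2[OF hc c0])
               (auto simp: Bn_def Sn_def sqn_scale_le)
          then have "\<And>i. continuous_on ({0..1} \<times> Sn n) (\<lambda>p. h (\<lambda>j. (1 - fst p) * snd p j) i)" by (rule coord)
          then show "continuous_on ({0..1} \<times> Sn n) (\<lambda>a. \<lambda>i. (1 - fst a) * snd a i - h (\<lambda>j. (1 - fst a) * snd a j) i)"
            by (intro continuous_on_coordinatewise_then_product continuous_intros coord_snd)
          show "\<And>a. a \<in> {0..1} \<times> Sn n \<Longrightarrow> sqn n (\<lambda>i. (1 - fst a) * snd a i - h (\<lambda>j. (1 - fst a) * snd a j) i) \<noteq> 0"
            using ne2 by auto
        qed
        show "H2 ` ({0..1} \<times> Sn n) \<subseteq> Sn n"
        proof clarify
          fix s x assume s: "s \<in> {0..1::real}" and x: "x \<in> Sn n"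
          have "(\<lambda>j. (1-s) * x j) \<in> Bn n"
            using s x unfolding Bn_def Sn_def by (auto simp: sqn_scale_le)
          hence "h (\<lambda>j. (1-s) * x j) \<in> Bn n" using hB by blast
          then show "H2 (s, x) \<in> Sn n" unfolding H2_def prod.case
            using x by (intro nz_in ne2[OF s x]) (auto simp: Sn_def Bn_def)
        qed
        show "H2 (0, x) = g1 x" if "x \<in> Sn n" for x by (simp add: H2_def g1_def)
        show "H2 (1, x) = nz n (\<lambda>i. 0 - h (\<lambda>j. 0) i)" if "x \<in> Sn n" for x by (simp add: H2_def)
      qed
    qed
    have "nsphere m = top_of_set (Sn n)"
      unfolding nsphere_def Euclidean_space_def euclidean_product_topology[symmetric] Sn_def sqn_def Suc
      by (simp add: subtopology_subtopology lessThan_Suc_atMost Collect_conj_eq Int_commute)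
    then show False using cth non_contractible_space_nsphere[of m] by simp
  qed
qed

definition BR :: "nat \<Rightarrow> real \<Rightarrow> (nat \<Rightarrow> real) set" where
  "BR n R = {x. (\<forall>i\<ge>n. x i = 0) \<and> sqn n x \<le> R^2}"

lemma brouwer_R:
  assumes R: "R > 0" and hc: "continuous_on (BR n R) h" and hi: "h ` BR n R \<subseteq> BR n R"
  shows "\<exists>x\<in>BR n R. h x = x"
proof -
  define sc where "sc y = (\<lambda>j. R * y j)" for y :: "nat \<Rightarrow> real"
  define g where "g y = (\<lambda>i. (1/R) * h (sc y) i)" for y
  have scB: "sc y \<in> BR n R" if "y \<in> Bn n" for y
  proof -
    have "sqn n (sc y) = R^2 * sqn n y" unfolding sc_def by (rule sqn_scale)
    also have "\<dots> \<le> R^2 * 1" using that unfolding Bn_def by (intro mult_left_mono) auto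
    finally show ?thesis using that unfolding BR_def Bn_def sc_def by auto
  qed
  have gB: "g y \<in> Bn n" if "y \<in> Bn n" for y
  proof -
    have hB: "h (sc y) \<in> BR n R" using hi scB[OF that] by blast
    have "sqn n (g y) = (1/R)^2 * sqn n (h (sc y))" unfolding g_def by (rule sqn_scale)
    also have "\<dots> \<le> (1/R)^2 * R^2" using hB unfolding BR_def by (intro mult_left_mono) auto
    also have "\<dots> = 1" using R by (simp add: power_divide)
    finally show ?thesis using hB unfolding Bn_def BR_def g_def by auto
  qed
  have "\<And>j. continuous_on (Bn n) (\<lambda>y. y j)" by (rule coord[OF continuous_on_id])
  then have csc: "continuous_on (Bn n) sc"
    unfolding sc_def by (intro continuous_on_coordinatewise_then_product continuous_intros)
  have "continuous_on (Bn n) (\<lambda>y. h (sc y))"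
    by (rule continuous_on_compose2[OF hc csc]) (use scB in auto)
  then have "\<And>i. continuous_on (Bn n) (\<lambda>y. h (sc y) i)" by (rule coord)
  then have cg: "continuous_on (Bn n) g"
    unfolding g_def by (intro continuous_on_coordinatewise_then_product continuous_intros)
  obtain y where y: "y \<in> Bn n" "g y = y" using brouwer_nat[OF cg] gB by blast
  have "h (sc y) = sc y"
  proof
    fix i
    have "(1/R) * h (sc y) i = y i" using fun_cong[OF y(2), of i] unfolding g_def by simp
    then show "h (sc y) i = sc y i" unfolding sc_def using R by (simp add: field_simps)
  qed
  then show ?thesis using scB[OF y(1)] by blast
qed

lemma compact_BR: "compact (BR n R)"
proof -
  define Bx where "Bx = PiE UNIV (\<lambda>i. if i < n then {-\<bar>R\<bar>..\<bar>R\<bar>} else {0::real})"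
  have "compactin (product_topology (\<lambda>i. euclidean) UNIV) Bx"
    unfolding Bx_def compactin_PiE by auto
  then have cB: "compact Bx" unfolding euclidean_product_topology by simp
  have cl: "closed (BR n R)"
  proof -
    have "BR n R = (\<Inter>i\<in>{n..}. {x. x i = 0}) \<inter> {x. sqn n x \<le> R^2}" unfolding BR_def by auto
    moreover have "closed {x::nat\<Rightarrow>real. x i = 0}" for i
      by (rule closed_Collect_eq[OF continuous_on_product_coordinates continuous_on_const])
    moreover have "closed {x::nat\<Rightarrow>real. sqn n x \<le> R^2}"
      by (rule closed_Collect_le[OF cont_sqn[OF continuous_on_id] continuous_on_const])
    ultimately show ?thesis by (metis closed_INT closed_Int)
  qed
  have sub: "BR n R \<subseteq> Bx"
  proof
    fix x assume x: "x \<in> BR n R"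
    have "\<bar>x i\<bar> \<le> \<bar>R\<bar>" if "i < n" for i
    proof -
      have "(x i)^2 \<le> sqn n x" unfolding sqn_def using that by (intro member_le_sum) auto
      also have "\<dots> \<le> R^2" using x unfolding BR_def by auto
      finally show ?thesis by (simp add: abs_le_square_iff)
    qed
    then show "x \<in> Bx" using x unfolding Bx_def BR_def by (force simp: abs_le_iff)
  qed
  have "BR n R = Bx \<inter> BR n R" using sub by auto
  then show ?thesis using compact_Int_closed[OF cB cl] by simp
qed



lemma ext_bound:
  fixes S :: "'a::real_normed_vector set"
  assumes "subspace S" "closed S" "a \<notin> S"
  obtains \<delta> where "\<delta> > 0" "\<And>s t. s \<in> S \<Longrightarrow> \<bar>t\<bar> * \<delta> \<le> norm (s + t *\<^sub>R a)"
proof -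
  have "S \<noteq> {}" using assms(1) subspace_0 by blast
  then have dpos: "infdist a S > 0" using assms by (simp add: infdist_pos_not_in_closed)
  have "\<bar>t\<bar> * infdist a S \<le> norm (s + t *\<^sub>R a)" if "s \<in> S" for s t
  proof (cases "t = 0")
    case True then show ?thesis by simp
  next
    case False
    have "- (1/t) *\<^sub>R s \<in> S" using assms(1) that by (simp add: subspace_neg subspace_scale)
    then have "infdist a S \<le> dist a (- (1/t) *\<^sub>R s)" by (rule infdist_le)
    also have "\<dots> = norm (a + (1/t) *\<^sub>R s)" by (simp add: dist_norm)
    finally have "\<bar>t\<bar> * infdist a S \<le> \<bar>t\<bar> * norm (a + (1/t) *\<^sub>R s)"
      by (simp add: mult_left_mono)
    also have "\<dots> = norm (t *\<^sub>R (a + (1/t) *\<^sub>R s))" by simp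
    also have "t *\<^sub>R (a + (1/t) *\<^sub>R s) = s + t *\<^sub>R a" using False by (simp add: algebra_simps)
    finally show ?thesis .
  qed
  then show ?thesis using that dpos by blast
qed

lemma closed_ext:
  fixes S :: "'a::real_normed_vector set"
  assumes S: "subspace S" "closed S" "a \<notin> S"
  shows "closed (span (insert a S))"
proof -
  obtain \<delta> where d: "\<delta> > 0" "\<And>s t. s \<in> S \<Longrightarrow> \<bar>t\<bar> * \<delta> \<le> norm (s + t *\<^sub>R a)"
    using ext_bound[OF S] by blast
  have sp: "span (insert a S) = {y. \<exists>t. y - t *\<^sub>R a \<in> S}"
  proof -
    have "span S = S" using S(1) by (simp add: span_eq_iff)
    note x = span_insert[of a S, unfolded this]
    show ?thesis by (rule x)
  qed
  show ?thesis unfolding sp closed_sequential_limits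
  proof (intro allI impI, elim conjE)
    fix x l assume xS: "\<forall>n. x n \<in> {y. \<exists>t. y - t *\<^sub>R a \<in> S}" and xl: "x \<longlonglongrightarrow> l"
    have "\<forall>n. \<exists>t. x n - t *\<^sub>R a \<in> S" using xS by simp
    then have "\<exists>t. \<forall>n. x n - t n *\<^sub>R a \<in> S" by (rule choice)
    then obtain t where t: "\<And>n. x n - t n *\<^sub>R a \<in> S" by blast
    have dt: "\<bar>t m - t n\<bar> * \<delta> \<le> norm (x m - x n)" for m n
    proof -
      have "(x m - t m *\<^sub>R a) - (x n - t n *\<^sub>R a) \<in> S" using t S(1) by (simp add: subspace_diff)
      then have "\<bar>t m - t n\<bar> * \<delta> \<le> norm (((x m - t m *\<^sub>R a) - (x n - t n *\<^sub>R a)) + (t m - t n) *\<^sub>R a)"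
        by (rule d(2))
      also have "\<dots> = norm (x m - x n)" by (simp add: algebra_simps)
      finally show ?thesis .
    qed
    have "Cauchy x" using xl by (rule LIMSEQ_imp_Cauchy)
    have "Cauchy t"
    proof (rule metric_CauchyI)
      fix e :: real assume e: "e > 0"
      have "e * \<delta> > 0" using e d(1) by simp
      then obtain M where M: "\<And>m n. m \<ge> M \<Longrightarrow> n \<ge> M \<Longrightarrow> dist (x m) (x n) < e * \<delta>"
        using \<open>Cauchy x\<close> unfolding Cauchy_def by blast
      show "\<exists>M. \<forall>m\<ge>M. \<forall>n\<ge>M. dist (t m) (t n) < e"
      proof (intro exI allI impI)
        fix m n assume "m \<ge> M" "n \<ge> M"
        then have "\<bar>t m - t n\<bar> * \<delta> < e * \<delta>" using dt[of m n] M[of m n] by (simp add: dist_norm)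
        then show "dist (t m) (t n) < e" using d(1) by (simp add: dist_real_def)
      qed
    qed
    then obtain \<tau> where tau: "t \<longlonglongrightarrow> \<tau>" using Cauchy_convergent_iff convergent_def by blast
    have "(\<lambda>n. x n - t n *\<^sub>R a) \<longlonglongrightarrow> l - \<tau> *\<^sub>R a"
      by (intro tendsto_intros xl tau)
    with t have "l - \<tau> *\<^sub>R a \<in> S"
      by (rule closed_sequentially[OF S(2)])
    then show "l \<in> {y. \<exists>t. y - t *\<^sub>R a \<in> S}" by blast
  qed
qed

lemma uc_bounded:
  fixes V :: "'a::real_normed_vector \<Rightarrow> 'b::real_normed_vector"
  assumes "uniformly_continuous_on UNIV V"
  shows "\<exists>M. \<forall>x1 x2. norm (x1 - x2) \<le> b \<longrightarrow> norm (V x1 - V x2) \<le> M"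
proof -
  obtain \<delta> where d: "\<delta> > 0" "\<And>x x'. dist x' x < \<delta> \<Longrightarrow> dist (V x') (V x) < 1"
    using assms unfolding uniformly_continuous_on_def by (metis UNIV_I zero_less_one)
  have step: "norm (x1 - x2) \<le> real k * (\<delta>/2) \<Longrightarrow> norm (V x1 - V x2) \<le> real k" for k x1 x2
  proof (induction k arbitrary: x1 x2)
    case 0 then show ?case by simp
  next
    case (Suc k)
    show ?case
    proof (cases "norm (x1 - x2) \<le> \<delta>/2")
      case True
      then have "dist (V x1) (V x2) < 1" using d by (simp add: dist_norm)
      then show ?thesis by (simp add: dist_norm)
    next
      case False
      define y where "y = x1 + ((\<delta>/2) / norm (x2 - x1)) *\<^sub>R (x2 - x1)"
      have nz: "norm (x2 - x1) > \<delta>/2" using False by (simp add: norm_minus_commute)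
      have ne: "norm (x2 - x1) \<noteq> 0" using nz d(1) by linarith
      have ny: "norm (y - x1) = \<delta>/2" unfolding y_def using ne d(1) by simp
      define N where "N = norm (x1 - x2)"
      have N: "norm (x2 - x1) = N" unfolding N_def by (rule norm_minus_commute)
      have Npos: "N > \<delta>/2" using nz N by simp
      have "y - x2 = (1 - (\<delta>/2) / N) *\<^sub>R (x1 - x2)"
        unfolding y_def N by (simp add: algebra_simps)
      then have "norm (y - x2) = \<bar>1 - (\<delta>/2) / N\<bar> * N" unfolding N_def by simp
      also have "\<dots> = (1 - (\<delta>/2) / N) * N" using Npos d(1) by (simp add: field_simps)
      also have "\<dots> = norm (x1 - x2) - \<delta>/2" using Npos d(1) unfolding N_def[symmetric] by (simp add: field_simps)
      also have "\<dots> \<le> real k * (\<delta>/2)" using Suc.prems by (simp add: algebra_simps)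
      finally have "norm (V y - V x2) \<le> real k" by (rule Suc.IH)
      moreover have "dist (V y) (V x1) < 1" using d ny by (simp add: dist_norm)
      ultimately have "norm (V x1 - V x2) \<le> norm (V x1 - V y) + norm (V y - V x2)"
        using norm_triangle_ineq[of "V x1 - V y" "V y - V x2"] by simp
      also have "\<dots> \<le> 1 + real k" using \<open>dist (V y) (V x1) < 1\<close> \<open>norm (V y - V x2) \<le> real k\<close>
        by (simp add: dist_norm norm_minus_commute)
      finally show ?thesis by simp
    qed
  qed
  define k where "k = nat (ceiling (b / (\<delta>/2)))"
  have "b / (\<delta>/2) \<le> real k" unfolding k_def by (rule real_nat_ceiling_ge)
  then have "b \<le> real k * (\<delta>/2)" using d(1) by (simp add: pos_divide_le_eq)
  show ?thesis
  proof (intro exI allI impI)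
    fix x1 x2 :: 'a assume "norm (x1 - x2) \<le> b"
    then show "norm (V x1 - V x2) \<le> real k" using step[of x1 x2 k] \<open>b \<le> real k * (\<delta>/2)\<close> by linarith
  qed
qed

definition goodS :: "'a::real_normed_vector set \<Rightarrow> bool" where
 "goodS S \<longleftrightarrow> (\<exists>(n::nat) (b::nat \<Rightarrow> 'a) (\<phi>::nat \<Rightarrow> 'a \<Rightarrow> real) C.
    (\<forall>i<n. linear (\<phi> i)) \<and> (\<forall>i<n. \<forall>v. \<bar>\<phi> i v\<bar> \<le> C * norm v) \<and>
    (\<forall>i<n. \<forall>j<n. \<phi> i (b j) = (if i = j then 1 else 0)) \<and>
    (\<forall>i<n. \<forall>s\<in>S. \<phi> i s = 0) \<and> (\<forall>w. (\<forall>i<n. \<phi> i w = 0) \<longrightarrow> w \<in> S))"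

lemma good_step:
  fixes S :: "'a::real_normed_vector set"
  assumes S: "subspace S" "closed S" "a \<notin> S" and g: "goodS (span (insert a S))"
  shows "goodS S"
proof -
  define S' where "S' = span (insert a S)"
  obtain \<delta> where d: "\<delta> > 0" "\<And>s t. s \<in> S \<Longrightarrow> \<bar>t\<bar> * \<delta> \<le> norm (s + t *\<^sub>R a)"
    using ext_bound[OF S] by blast
  obtain n :: nat and b :: "nat \<Rightarrow> 'a" and \<phi> :: "nat \<Rightarrow> 'a \<Rightarrow> real" and C :: real where lin: "\<forall>i<n. linear (\<phi> i)" and bd: "\<forall>i<n. \<forall>v. \<bar>\<phi> i v\<bar> \<le> C * norm v"
    and dl: "\<forall>i<n. \<forall>j<n. \<phi> i (b j) = (if i = j then 1 else 0)"
    and van: "\<forall>i<n. \<forall>s\<in>S'. \<phi> i s = 0" and ker: "\<forall>w. (\<forall>i<n. \<phi> i w = 0) \<longrightarrow> w \<in> S'"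
    using g unfolding goodS_def S'_def by blast
  have "span S = S" using S(1) by (simp add: span_eq_iff)
  note S'c = span_insert[of a S, unfolded this, folded S'_def]
  have S'char: "y \<in> S' \<longleftrightarrow> (\<exists>t. y - t *\<^sub>R a \<in> S)" for y
    by (subst S'c) simp
  have aS': "a \<in> S'" unfolding S'_def by (simp add: span_base)
  have SS': "S \<subseteq> S'" unfolding S'_def by (meson span_superset subset_insertI subset_trans)
  define \<theta> where "\<theta> y = (THE t. y - t *\<^sub>R a \<in> S)" for y
  have \<theta>eq: "\<theta> y = t" if "y - t *\<^sub>R a \<in> S" for y t
    unfolding \<theta>_def
  proof (rule the_equality)
    show "y - t *\<^sub>R a \<in> S" by (rule that)
    fix t' assume t': "y - t' *\<^sub>R a \<in> S"
    have "(y - t *\<^sub>R a) - (y - t' *\<^sub>R a) \<in> S" by (rule subspace_diff[OF S(1) that t'])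
    moreover have "(y - t *\<^sub>R a) - (y - t' *\<^sub>R a) = (t' - t) *\<^sub>R a" by (simp add: algebra_simps)
    ultimately have e: "(t' - t) *\<^sub>R a \<in> S" by simp
    show "t' = t"
    proof (rule ccontr)
      assume "t' \<noteq> t"
      then have "(1 / (t' - t)) *\<^sub>R ((t' - t) *\<^sub>R a) = a" by simp
      moreover have "(1 / (t' - t)) *\<^sub>R ((t' - t) *\<^sub>R a) \<in> S" by (rule subspace_scale[OF S(1) e])
      ultimately show False using S(3) by simp
    qed
  qed
  define P where "P v = v - (\<Sum>i<n. \<phi> i v *\<^sub>R b i)" for v
  have \<phi>sum: "\<phi> j (\<Sum>i<n. c i *\<^sub>R b i) = c j" if "j < n" for j c
  proof -
    have "\<phi> j (\<Sum>i<n. c i *\<^sub>R b i) = (\<Sum>i<n. c i * \<phi> j (b i))"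
      using lin that by (simp add: linear_sum linear_scale)
    also have "\<dots> = (\<Sum>i<n. if i = j then c i else 0)"
      using dl that by (intro sum.cong) auto
    also have "\<dots> = c j" using that by simp
    finally show ?thesis .
  qed
  have \<phi>P: "\<phi> j (P v) = 0" if "j < n" for j v
    unfolding P_def using lin that \<phi>sum[OF that] by (simp add: linear_diff)
  have PS': "P v \<in> S'" for v using ker \<phi>P by blast
  define \<psi> where "\<psi> v = \<theta> (P v)" for v
  have key: "P v - \<psi> v *\<^sub>R a \<in> S" for v
  proof -
    obtain t where "P v - t *\<^sub>R a \<in> S" using PS'[of v] S'char by blast
    then show ?thesis unfolding \<psi>_def using \<theta>eq by simp
  qed
  have Padd: "P (v + w) = P v + P w" for v w
    unfolding P_def using lin
    by (simp add: linear_add scaleR_add_left sum.distrib algebra_simps)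
  have Pscale: "P (c *\<^sub>R v) = c *\<^sub>R P v" for c v
    unfolding P_def using lin
    by (simp add: linear_scale scaleR_diff_right scaleR_sum_right algebra_simps)
  have lin\<psi>: "linear \<psi>"
  proof (rule linearI)
    fix v w
    have "P (v + w) - (\<psi> v + \<psi> w) *\<^sub>R a = (P v - \<psi> v *\<^sub>R a) + (P w - \<psi> w *\<^sub>R a)"
      by (simp add: Padd algebra_simps)
    also have "\<dots> \<in> S" using key S(1) by (simp add: subspace_add)
    finally show "\<psi> (v + w) = \<psi> v + \<psi> w" unfolding \<psi>_def[of "v+w"] by (rule \<theta>eq)
  next
    fix c v
    have "P (c *\<^sub>R v) - (c * \<psi> v) *\<^sub>R a = c *\<^sub>R (P v - \<psi> v *\<^sub>R a)"
      by (simp add: Pscale algebra_simps)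
    also have "\<dots> \<in> S" using key S(1) by (simp add: subspace_scale)
    finally show "\<psi> (c *\<^sub>R v) = c *\<^sub>R \<psi> v" unfolding \<psi>_def[of "c *\<^sub>R v"] by (simp add: \<theta>eq)
  qed
  define B where "B = (\<Sum>i<n. norm (b i))"
  have normP: "norm (P v) \<le> (1 + C * B) * norm v" for v
  proof -
    have "norm (P v) \<le> norm v + norm (\<Sum>i<n. \<phi> i v *\<^sub>R b i)"
      unfolding P_def by (rule norm_triangle_ineq4)
    also have "norm (\<Sum>i<n. \<phi> i v *\<^sub>R b i) \<le> (\<Sum>i<n. \<bar>\<phi> i v\<bar> * norm (b i))"
      by (rule order_trans[OF norm_sum]) simp
    also have "\<dots> \<le> (\<Sum>i<n. (C * norm v) * norm (b i))"
      using bd by (intro sum_mono mult_right_mono) auto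
    also have "\<dots> = C * B * norm v" unfolding B_def by (simp add: sum_distrib_left sum_distrib_right algebra_simps)
    finally show ?thesis by (simp add: algebra_simps)
  qed
  define C' where "C' = max C ((1 + C * B) / \<delta>)"
  have bd\<psi>: "\<bar>\<psi> v\<bar> \<le> C' * norm v" for v
  proof -
    have "\<bar>\<psi> v\<bar> * \<delta> \<le> norm ((P v - \<psi> v *\<^sub>R a) + \<psi> v *\<^sub>R a)" by (rule d(2)[OF key])
    also have "\<dots> = norm (P v)" by simp
    also have "\<dots> \<le> (1 + C * B) * norm v" by (rule normP)
    finally have "\<bar>\<psi> v\<bar> \<le> (1 + C * B) / \<delta> * norm v" using d(1) by (simp add: field_simps)
    also have "\<dots> \<le> C' * norm v" unfolding C'_def by (intro mult_right_mono) auto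
    finally show ?thesis .
  qed
  have \<theta>0: "\<theta> s = 0" if "s \<in> S" for s using that \<theta>eq[of s 0] by simp
  have Pfix: "P s = s" if "s \<in> S'" for s unfolding P_def using van that by simp
  have \<psi>b: "\<psi> (b j) = 0" if "j < n" for j
  proof -
    have "(\<Sum>i<n. \<phi> i (b j) *\<^sub>R b i) = (\<Sum>i<n. if i = j then b i else 0)"
      by (rule sum.cong) (use dl that in auto)
    also have "\<dots> = b j" using that by simp
    finally have "P (b j) = 0" unfolding P_def by simp
    then show ?thesis unfolding \<psi>_def using \<theta>0 S(1) subspace_0 by auto
  qed
  have \<psi>a: "\<psi> a = 1" unfolding \<psi>_def Pfix[OF aS'] using \<theta>eq[of a 1] S(1) subspace_0 by auto
  show ?thesis unfolding goodS_def
  proof (intro exI[of _ "Suc n"] exI[of _ "b(n := a)"] exI[of _ "\<phi>(n := \<psi>)"] exI[of _ C'] conjI allI impI ballI)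
    fix i assume "i < Suc n" then show "linear ((\<phi>(n := \<psi>)) i)" using lin lin\<psi> by (cases "i = n") auto
  next
    fix i v assume "i < Suc n" then show "\<bar>(\<phi>(n := \<psi>)) i v\<bar> \<le> C' * norm v"
    proof (cases "i = n")
      case True then show ?thesis using bd\<psi> by simp
    next
      case False
      then have "\<bar>\<phi> i v\<bar> \<le> C * norm v" using bd \<open>i < Suc n\<close> by auto
      also have "\<dots> \<le> C' * norm v" unfolding C'_def by (intro mult_right_mono) auto
      finally show ?thesis using False by simp
    qed
  next
    fix i j assume ij: "i < Suc n" "j < Suc n"
    show "(\<phi>(n := \<psi>)) i ((b(n := a)) j) = (if i = j then 1 else 0)"
    proof (cases "i = n")
      case True
      then show ?thesis using \<psi>a \<psi>b ij by (cases "j = n") auto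
    next
      case False
      then show ?thesis using dl van aS' ij by (cases "j = n") auto
    qed
  next
    fix i s assume "i < Suc n" "s \<in> S"
    then show "(\<phi>(n := \<psi>)) i s = 0"
      using van SS' \<theta>0 Pfix unfolding \<psi>_def by (cases "i = n") auto
  next
    fix w assume w: "\<forall>i<Suc n. (\<phi>(n := \<psi>)) i w = 0"
    then have "\<forall>i<n. \<phi> i w = 0" by (metis less_SucI less_irrefl fun_upd_other)
    then have wS': "w \<in> S'" using ker by blast
    have "\<psi> w = 0" using w by (metis fun_upd_same lessI)
    then have "\<theta> w = 0" unfolding \<psi>_def Pfix[OF wS'] .
    moreover obtain t where "w - t *\<^sub>R a \<in> S" using wS' S'char by blast
    ultimately show "w \<in> S" using \<theta>eq by force
  qed
qed

lemma good_fin: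
  fixes F :: "'a::real_normed_vector set"
  assumes "finite F"
  shows "subspace S \<Longrightarrow> closed S \<Longrightarrow> span (S \<union> F) = UNIV \<Longrightarrow> goodS S"
  using assms
proof (induction F arbitrary: S rule: finite_induct)
  case empty
  then have "S = UNIV" using span_eq_iff[of S] by simp
  then show ?case unfolding goodS_def by (intro exI[of _ 0]) auto
next
  case (insert a F)
  show ?case
  proof (cases "a \<in> S")
    case True
    then have "S \<union> insert a F = S \<union> F" by blast
    then show ?thesis using insert by simp
  next
    case False
    define S' where "S' = span (insert a S)"
    have "subspace S'" unfolding S'_def by simp
    moreover have "closed S'" unfolding S'_def by (rule closed_ext[OF insert.prems(1,2) False])
    moreover have "span (S' \<union> F) = UNIV"
    proof -
      have "S \<union> insert a F \<subseteq> S' \<union> F" unfolding S'_def using span_superset by blast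
      then have "span (S \<union> insert a F) \<subseteq> span (S' \<union> F)" by (rule span_mono)
      then show ?thesis using insert.prems(3) by auto
    qed
    ultimately have "goodS S'" using insert.IH by blast
    then show ?thesis unfolding S'_def by (rule good_step[OF insert.prems(1,2) False])
  qed
qed


theorem proposition2p7:
  fixes U :: "'e::banach \<Rightarrow> 'x::banach" and V :: "'x \<Rightarrow> 'e"
    and E0 :: "'e set" and b d :: real
  assumes "homeomorphism UNIV UNIV U V"
    and "uniformly_continuous_on UNIV V"
    and "b > 0" and "d > 0"
    and "subspace E0" and "closed E0" and "finite_codim E0"
    and "d > modulus_uc V b"
  shows "\<exists>K. compact K \<and>
           ball 0 b \<subseteq> {k + y | k y. k \<in> K \<and> y \<in> U ` ((\<lambda>z. (2 * d) *\<^sub>R z) ` (E0 \<inter> ball 0 1))}"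
proof -
  have VU: "\<And>x. V (U x) = x" and UV: "\<And>y. U (V y) = y"
    and cU: "continuous_on UNIV U" and cV: "continuous_on UNIV V"
    using assms(1) unfolding homeomorphism_def by auto
  define m where "m = modulus_uc V b"
  obtain M where M: "\<forall>x1 x2. norm (x1 - x2) \<le> b \<longrightarrow> norm (V x1 - V x2) \<le> M"
    using uc_bounded[OF assms(2)] by blast
  have bdd: "bdd_above {norm (V x1 - V x2) | x1 x2. norm (x1 - x2) \<le> b}"
    by (rule bdd_aboveI[where M=M]) (use M in blast)
  have mb: "norm (V x1 - V x2) \<le> m" if "norm (x1 - x2) \<le> b" for x1 x2
    unfolding m_def modulus_uc_def by (rule cSup_upper[OF _ bdd]) (use that in blast)
  have m0: "0 \<le> m" using mb[of 0 0] assms(3) by simp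
  have md: "m < d" using assms(8) unfolding m_def .
  obtain F where F: "finite F" "span (E0 \<union> F) = UNIV" using assms(7) unfolding finite_codim_def by blast
  have "goodS E0" by (rule good_fin[OF F(1) assms(5) assms(6) F(2)])
  then obtain n :: nat and bv :: "nat \<Rightarrow> 'e" and \<phi> :: "nat \<Rightarrow> 'e \<Rightarrow> real" and C :: real
    where lin: "\<forall>i<n. linear (\<phi> i)" and bd: "\<forall>i<n. \<forall>v. \<bar>\<phi> i v\<bar> \<le> C * norm v"
    and dl: "\<forall>i<n. \<forall>j<n. \<phi> i (bv j) = (if i = j then 1 else 0)"
    and ker: "\<forall>w. (\<forall>i<n. \<phi> i w = 0) \<longrightarrow> w \<in> E0"
    unfolding goodS_def by blast
  define Cp where "Cp = max C 0 + 1"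
  have Cp: "Cp > 0" unfolding Cp_def by simp
  have bdp: "\<bar>\<phi> i v\<bar> \<le> Cp * norm v" if "i < n" for i v
  proof -
    have "\<bar>\<phi> i v\<bar> \<le> C * norm v" using bd that by blast
    also have "\<dots> \<le> Cp * norm v" unfolding Cp_def by (intro mult_right_mono) auto
    finally show ?thesis .
  qed
  have bl: "bounded_linear (\<phi> i)" if "i < n" for i
  proof (rule bounded_linear_intro)
    have li: "linear (\<phi> i)" using lin that by blast
    show "\<phi> i (x + y) = \<phi> i x + \<phi> i y" for x y using li by (simp add: linear_add)
    show "\<phi> i (r *\<^sub>R x) = r *\<^sub>R \<phi> i x" for r x using li by (simp add: linear_scale)
    show "norm (\<phi> i x) \<le> norm x * Cp" for x using bdp[OF that, of x] by (simp add: mult.commute)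
  qed
  define Bb where "Bb = (\<Sum>i<n. norm (bv i)) + 1"
  have Bb: "Bb > 0" unfolding Bb_def by (simp add: add_nonneg_pos sum_nonneg)
  have Bbi: "norm (bv i) \<le> Bb" if "i < n" for i
  proof -
    have "norm (bv i) \<le> (\<Sum>i<n. norm (bv i))" using that by (intro member_le_sum) auto
    then show ?thesis unfolding Bb_def by simp
  qed
  define c where "c t = (\<Sum>i<n. t i *\<^sub>R bv i)" for t :: "nat \<Rightarrow> real"
  have \<phi>c: "\<phi> j (c t) = t j" if "j < n" for j t
  proof -
    have "\<phi> j (c t) = (\<Sum>i<n. t i * \<phi> j (bv i))"
      unfolding c_def using lin that by (simp add: linear_sum linear_scale)
    also have "\<dots> = (\<Sum>i<n. if i = j then t i else 0)"
      using dl that by (intro sum.cong) auto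
    also have "\<dots> = t j" using that by simp
    finally show ?thesis .
  qed
  have normc: "norm (c t - c s) \<le> Bb * (\<Sum>i<n. \<bar>t i - s i\<bar>)" for t s
  proof -
    have "c t - c s = (\<Sum>i<n. (t i - s i) *\<^sub>R bv i)"
      unfolding c_def by (simp add: sum_subtractf scaleR_diff_left)
    then have "norm (c t - c s) \<le> (\<Sum>i<n. \<bar>t i - s i\<bar> * norm (bv i))"
      by (metis (no_types, lifting) norm_scaleR norm_sum order_trans sum.cong order_refl)
    also have "\<dots> \<le> (\<Sum>i<n. \<bar>t i - s i\<bar> * Bb)"
      using Bbi by (intro sum_mono mult_left_mono) auto
    also have "\<dots> = Bb * (\<Sum>i<n. \<bar>t i - s i\<bar>)" by (simp add: sum_distrib_left mult.commute)
    finally show ?thesis .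
  qed
  define \<phi>v where "\<phi>v v = (\<lambda>i. if i < n then \<phi> i v else 0)" for v
  have \<phi>c0: "\<phi> j (c (\<phi>v v)) = \<phi> j v" if "j < n" for j v
    using \<phi>c[OF that] that unfolding \<phi>v_def by simp
  define \<rho> where "\<rho> = (d - m) / (Bb * (2 * real n + 1))"
  have \<rho>: "\<rho> > 0" unfolding \<rho>_def using md Bb by (intro divide_pos_pos mult_pos_pos) auto
  define r where "r = (2 * real n + 1) * \<rho>"
  have Bbr: "Bb * r = d - m"
  proof -
    have nz: "Bb * (2 * real n + 1) \<noteq> 0" using Bb by (simp add: add_nonneg_pos)
    have "Bb * r = (Bb * (2 * real n + 1)) * ((d - m) / (Bb * (2 * real n + 1)))"
      unfolding r_def \<rho>_def by (simp only: mult.assoc mult.commute mult.left_commute)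
    also have "\<dots> = d - m" using nz by simp
    finally show ?thesis .
  qed
  define N where "N = nat (ceiling (Cp * m / \<rho>)) + 1"
  define G where "G = {k \<in> PiE {..<n} (\<lambda>_. {- int N..int N}). \<exists>u. norm u \<le> m \<and> (\<forall>i<n. \<bar>\<phi> i u - \<rho> * real_of_int (k i)\<bar> \<le> \<rho>)}"
  have finG: "finite G"
    unfolding G_def by (rule finite_subset[OF _ finite_PiE[of "{..<n}" "\<lambda>_. {- int N..int N}"]]) auto
  define uk where "uk k = (SOME u. norm u \<le> m \<and> (\<forall>i<n. \<bar>\<phi> i u - \<rho> * real_of_int (k i)\<bar> \<le> \<rho>))" for k
  have uk: "norm (uk k) \<le> m \<and> (\<forall>i<n. \<bar>\<phi> i (uk k) - \<rho> * real_of_int (k i)\<bar> \<le> \<rho>)" if "k \<in> G" for k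
    unfolding uk_def by (rule someI_ex) (use that in \<open>auto simp: G_def\<close>)
  define wt where "wt k t = max 0 (r - (\<Sum>i<n. \<bar>t i - \<phi> i (uk k)\<bar>))" for k t
  define W where "W t = (\<Sum>k\<in>G. wt k t)" for t
  define \<beta> where "\<beta> t = c t + (\<Sum>k\<in>G. (wt k t / max \<rho> (W t)) *\<^sub>R (uk k - c (\<phi>v (uk k))))" for t
  have ct: "\<And>i. continuous_on UNIV (\<lambda>t::nat\<Rightarrow>real. t i)" by (rule continuous_on_product_coordinates)
  have c\<beta>: "continuous_on UNIV \<beta>"
    unfolding \<beta>_def wt_def W_def c_def
    by (intro continuous_intros ct) (use \<rho> in \<open>auto simp: max_def\<close>)
  have \<phi>\<beta>: "\<phi> j (\<beta> t) = t j" if "j < n" for j t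
  proof -
    have li: "linear (\<phi> j)" using lin that by blast
    have "\<phi> j (\<Sum>k\<in>G. (wt k t / max \<rho> (W t)) *\<^sub>R (uk k - c (\<phi>v (uk k))))
        = (\<Sum>k\<in>G. \<phi> j ((wt k t / max \<rho> (W t)) *\<^sub>R (uk k - c (\<phi>v (uk k)))))"
      using li by (simp add: linear_sum)
    also have "\<dots> = 0"
      by (rule sum.neutral) (use li \<phi>c0[OF that] in \<open>simp add: linear_scale linear_diff\<close>)
    finally have z: "\<phi> j (\<Sum>k\<in>G. (wt k t / max \<rho> (W t)) *\<^sub>R (uk k - c (\<phi>v (uk k)))) = 0" .
    show ?thesis unfolding \<beta>_def using li z \<phi>c[OF that] by (simp add: linear_add)
  qed
  have good: "norm (\<beta> (\<phi>v u)) \<le> m + Bb * r" if u: "norm u \<le> m" for u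
  proof -
    define t where "t = \<phi>v u"
    have ti: "t i = \<phi> i u" if "i < n" for i using that unfolding t_def \<phi>v_def by simp
    have tb: "\<bar>t i\<bar> \<le> Cp * m" if "i < n" for i
      using bdp[OF that, of u] u Cp ti[OF that] by (smt (verit) mult_left_mono)
    define k0 where "k0 = restrict (\<lambda>i. round (t i / \<rho>)) {..<n}"
    have rd: "\<bar>t i - \<rho> * real_of_int (round (t i / \<rho>))\<bar> \<le> \<rho> / 2" for i
    proof -
      have "\<bar>real_of_int (round (t i / \<rho>)) - t i / \<rho>\<bar> \<le> 1/2" by (rule of_int_round_abs_le)
      then have "\<rho> * \<bar>real_of_int (round (t i / \<rho>)) - t i / \<rho>\<bar> \<le> \<rho> * (1/2)"
        using \<rho> by (intro mult_left_mono) auto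
      moreover have "\<rho> * \<bar>real_of_int (round (t i / \<rho>)) - t i / \<rho>\<bar> = \<bar>\<rho> * (real_of_int (round (t i / \<rho>)) - t i / \<rho>)\<bar>"
        using \<rho> by (simp add: abs_mult)
      moreover have "\<rho> * (real_of_int (round (t i / \<rho>)) - t i / \<rho>) = - (t i - \<rho> * real_of_int (round (t i / \<rho>)))"
        using \<rho> by (simp add: field_simps)
      ultimately show ?thesis by (simp add: abs_minus_commute)
    qed
    have k0N: "- int N \<le> round (t i / \<rho>) \<and> round (t i / \<rho>) \<le> int N" if "i < n" for i
    proof -
      have "\<bar>real_of_int (round (t i / \<rho>))\<bar> \<le> \<bar>t i / \<rho>\<bar> + 1/2"
        using of_int_round_abs_le[of "t i / \<rho>"] by linarith
      also have "\<bar>t i / \<rho>\<bar> = \<bar>t i\<bar> / \<rho>" using \<rho> by (simp add: abs_divide)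
      also have "\<dots> \<le> Cp * m / \<rho>" using tb[OF that] \<rho> by (intro divide_right_mono) auto
      also have "Cp * m / \<rho> \<le> real (nat (ceiling (Cp * m / \<rho>)))" by (rule real_nat_ceiling_ge)
      finally have "\<bar>real_of_int (round (t i / \<rho>))\<bar> \<le> real N" unfolding N_def by simp
      then show ?thesis by linarith
    qed
    have k0G: "k0 \<in> G"
      unfolding G_def
    proof (intro CollectI conjI exI)
      show "k0 \<in> PiE {..<n} (\<lambda>_. {- int N..int N})" unfolding k0_def using k0N by auto
      show "norm u \<le> m" by (rule u)
      show "\<forall>i<n. \<bar>\<phi> i u - \<rho> * real_of_int (k0 i)\<bar> \<le> \<rho>"
      proof (intro allI impI)
        fix i assume i: "i < n"
        then have "k0 i = round (t i / \<rho>)" unfolding k0_def by simp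
        then show "\<bar>\<phi> i u - \<rho> * real_of_int (k0 i)\<bar> \<le> \<rho>" using rd[of i] ti[OF i] \<rho> by simp
      qed
    qed
    have w0: "wt k0 t \<ge> \<rho>"
    proof -
      have "\<bar>t i - \<phi> i (uk k0)\<bar> \<le> 2 * \<rho>" if "i < n" for i
      proof -
        have "\<bar>\<phi> i (uk k0) - \<rho> * real_of_int (k0 i)\<bar> \<le> \<rho>" using uk[OF k0G] that by blast
        moreover have "k0 i = round (t i / \<rho>)" using that unfolding k0_def by simp
        ultimately have a: "\<bar>\<phi> i (uk k0) - \<rho> * real_of_int (round (t i / \<rho>))\<bar> \<le> \<rho>" by simp
        show ?thesis using a rd[of i] \<rho> unfolding abs_le_iff by linarith
      qed
      then have "(\<Sum>i<n. \<bar>t i - \<phi> i (uk k0)\<bar>) \<le> (\<Sum>i<n. 2 * \<rho>)" by (intro sum_mono) auto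
      then have "(\<Sum>i<n. \<bar>t i - \<phi> i (uk k0)\<bar>) \<le> 2 * real n * \<rho>" by simp
      then show ?thesis unfolding wt_def r_def by (simp add: algebra_simps)
    qed
    have wnn: "wt k s \<ge> 0" for k s unfolding wt_def by simp
    have Wge: "W t \<ge> \<rho>"
    proof -
      have "wt k0 t \<le> W t" unfolding W_def using finG k0G wnn by (intro member_le_sum) auto
      then show ?thesis using w0 by simp
    qed
    then have mx: "max \<rho> (W t) = W t" by simp
    have Wp: "W t > 0" using Wge \<rho> by simp
    have s1: "(\<Sum>k\<in>G. wt k t / W t) = 1"
      using Wp unfolding W_def by (simp add: sum_divide_distrib[symmetric])
    have e1: "(\<Sum>k\<in>G. (wt k t / W t) *\<^sub>R c t) = (\<Sum>k\<in>G. wt k t / W t) *\<^sub>R c t"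
      by (rule scaleR_sum_left[symmetric])
    have "\<beta> t = (\<Sum>k\<in>G. (wt k t / W t) *\<^sub>R c t) + (\<Sum>k\<in>G. (wt k t / W t) *\<^sub>R (uk k - c (\<phi>v (uk k))))"
      unfolding \<beta>_def mx e1 s1 by simp
    also have "\<dots> = (\<Sum>k\<in>G. (wt k t / W t) *\<^sub>R c t + (wt k t / W t) *\<^sub>R (uk k - c (\<phi>v (uk k))))"
      by (rule sum.distrib[symmetric])
    also have "\<dots> = (\<Sum>k\<in>G. (wt k t / W t) *\<^sub>R ((c t - c (\<phi>v (uk k))) + uk k))"
      by (rule sum.cong) (simp_all add: scaleR_add_right scaleR_diff_right algebra_simps)
    finally have beq: "\<beta> t = (\<Sum>k\<in>G. (wt k t / W t) *\<^sub>R ((c t - c (\<phi>v (uk k))) + uk k))" .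
    have trm: "norm ((wt k t / W t) *\<^sub>R ((c t - c (\<phi>v (uk k))) + uk k)) \<le> (wt k t / W t) * (Bb * r + m)"
      if "k \<in> G" for k
    proof (cases "wt k t = 0")
      case True then show ?thesis by simp
    next
      case False
      then have "(\<Sum>i<n. \<bar>t i - \<phi> i (uk k)\<bar>) < r" unfolding wt_def by (simp add: max_def split: if_splits)
      moreover have "(\<Sum>i<n. \<bar>t i - \<phi>v (uk k) i\<bar>) = (\<Sum>i<n. \<bar>t i - \<phi> i (uk k)\<bar>)"
        unfolding \<phi>v_def by simp
      ultimately have "norm (c t - c (\<phi>v (uk k))) \<le> Bb * r"
        using normc[of t "\<phi>v (uk k)"] Bb by (smt (verit) mult_left_mono)
      then have "norm ((c t - c (\<phi>v (uk k))) + uk k) \<le> Bb * r + m"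
        using uk[OF that] norm_triangle_ineq[of "c t - c (\<phi>v (uk k))" "uk k"] by linarith
      moreover have l0: "wt k t / W t \<ge> 0" using wnn Wp by simp
      ultimately have "(wt k t / W t) * norm ((c t - c (\<phi>v (uk k))) + uk k) \<le> (wt k t / W t) * (Bb * r + m)"
        by (rule mult_left_mono)
      moreover have "\<bar>wt k t / W t\<bar> = wt k t / W t" using l0 by (rule abs_of_nonneg)
      ultimately show ?thesis by (simp only: norm_scaleR)
    qed
    have "norm (\<beta> t) \<le> (\<Sum>k\<in>G. norm ((wt k t / W t) *\<^sub>R ((c t - c (\<phi>v (uk k))) + uk k)))"
      unfolding beq by (rule norm_sum)
    also have "\<dots> \<le> (\<Sum>k\<in>G. (wt k t / W t) * (Bb * r + m))" by (intro sum_mono trm)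
    also have "\<dots> = (\<Sum>k\<in>G. wt k t / W t) * (Bb * r + m)" by (rule sum_distrib_right[symmetric])
    also have "\<dots> = Bb * r + m" unfolding s1 by simp
    finally show ?thesis unfolding t_def by simp
  qed
  define R where "R = (real n + 1) * (Cp * m) + 1"
  have R: "R > 0" unfolding R_def using Cp m0 by (simp add: add_nonneg_pos)
  have nR: "real n * (Cp * m)^2 \<le> R^2"
  proof -
    have a0: "0 \<le> Cp * m" using Cp m0 by simp
    have "real n \<le> (real n + 1)^2" by (simp add: power2_eq_square algebra_simps)
    then have "real n * (Cp * m)^2 \<le> (real n + 1)^2 * (Cp * m)^2" by (intro mult_right_mono) auto
    also have "\<dots> = ((real n + 1) * (Cp * m))^2" by (simp add: power_mult_distrib)
    also have "\<dots> \<le> R^2" unfolding R_def using a0 by (intro power_mono) auto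
    finally show ?thesis .
  qed
  define D where "D = BR n R"
  define K where "K = (\<lambda>t. - U (\<beta> t)) ` D"
  have cUb: "continuous_on UNIV (\<lambda>t. U (\<beta> t))" by (rule continuous_on_compose2[OF cU c\<beta>]) auto
  have "compact K" unfolding K_def D_def
    by (rule compact_continuous_image[OF _ compact_BR]) (intro continuous_intros continuous_on_subset[OF cUb], simp)
  moreover have "ball 0 b \<subseteq> {k + y | k y. k \<in> K \<and> y \<in> U ` ((\<lambda>z. (2 * d) *\<^sub>R z) ` (E0 \<inter> ball 0 1))}"
  proof
    fix x :: 'x assume "x \<in> ball 0 b"
    then have nx: "norm x \<le> b" by simp
    define h where "h t = (\<lambda>i. if i < n then - \<phi> i (V (x + U (\<beta> t)) - \<beta> t) else 0)" for t
    have d\<delta>: "norm (V (x + U (\<beta> t)) - \<beta> t) \<le> m" for t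
      using mb[of "x + U (\<beta> t)" "U (\<beta> t)"] nx by (simp add: VU)
    have hD: "h t \<in> D" for t
    proof -
      have "(h t i)^2 \<le> (Cp * m)^2" if "i < n" for i
      proof -
        have "\<bar>h t i\<bar> \<le> Cp * norm (V (x + U (\<beta> t)) - \<beta> t)" unfolding h_def using bdp[OF that] that by simp
        also have "\<dots> \<le> Cp * m" using d\<delta> Cp by (intro mult_left_mono) auto
        finally have "\<bar>h t i\<bar> \<le> Cp * m" .
        from power_mono[OF this abs_ge_zero, of 2] show ?thesis by simp
      qed
      then have "sqn n (h t) \<le> real (card {..<n}) * (Cp * m)^2" unfolding sqn_def
        by (intro sum_bounded_above) auto
      then have "sqn n (h t) \<le> R^2" using nR by simp
      then show ?thesis unfolding D_def BR_def h_def by simp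
    qed
    have cw: "continuous_on UNIV (\<lambda>t. V (x + U (\<beta> t)) - \<beta> t)"
    proof -
      have "continuous_on UNIV (\<lambda>t. x + U (\<beta> t))" by (intro continuous_intros cUb)
      then have "continuous_on UNIV (\<lambda>t. V (x + U (\<beta> t)))" by (rule continuous_on_compose2[OF cV]) auto
      then show ?thesis by (intro continuous_intros c\<beta>)
    qed
    have "continuous_on D (\<lambda>t. h t i)" for i
    proof (cases "i < n")
      case True
      have "continuous_on UNIV (\<lambda>t. \<phi> i (V (x + U (\<beta> t)) - \<beta> t))"
        by (rule bounded_linear.continuous_on[OF bl[OF True] cw])
      then have "continuous_on D (\<lambda>t. - \<phi> i (V (x + U (\<beta> t)) - \<beta> t))"
        by (intro continuous_intros) (rule continuous_on_subset, auto)
      then show ?thesis unfolding h_def using True by simp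
    next
      case False then show ?thesis unfolding h_def by simp
    qed
    then have ch: "continuous_on D h" by (intro continuous_on_coordinatewise_then_product)
    obtain t where tD: "t \<in> D" and ht: "h t = t"
      using brouwer_R[OF R ch[unfolded D_def]] hD unfolding D_def by blast
    define w where "w = V (x + U (\<beta> t))"
    have tt: "t i = - \<phi> i (w - \<beta> t)" if "i < n" for i
      using fun_cong[OF ht, of i] that unfolding h_def w_def by simp
    have "\<phi> i w = 0" if "i < n" for i
    proof -
      have li: "linear (\<phi> i)" using lin that by blast
      have "\<phi> i (w - \<beta> t) = \<phi> i w - t i" using li \<phi>\<beta>[OF that] by (simp add: linear_diff)
      then show ?thesis using tt[OF that] by simp
    qed
    then have wE: "w \<in> E0" using ker by blast
    have tphi: "t = \<phi>v (- (w - \<beta> t))"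
    proof
      fix i show "t i = \<phi>v (- (w - \<beta> t)) i"
      proof (cases "i < n")
        case True
        have li: "linear (\<phi> i)" using lin True by blast
        have "\<phi> i (- (w - \<beta> t)) = - \<phi> i (w - \<beta> t)" by (rule linear_neg[OF li])
        then show ?thesis unfolding \<phi>v_def using True tt[OF True] by simp
      next
        case False then show ?thesis using tD unfolding D_def BR_def \<phi>v_def by simp
      qed
    qed
    have n\<delta>: "norm (- (w - \<beta> t)) \<le> m" using d\<delta>[of t] unfolding w_def norm_minus_cancel .
    have "norm (\<beta> t) \<le> m + Bb * r" using good[OF n\<delta>] tphi by simp
    then have nb: "norm (\<beta> t) \<le> d" using Bbr by simp
    have "norm w \<le> norm (\<beta> t) + norm (w - \<beta> t)" using norm_triangle_ineq[of "\<beta> t" "w - \<beta> t"] by simp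
    also have "\<dots> \<le> d + m" using nb n\<delta> unfolding norm_minus_cancel by linarith
    finally have nw: "norm w < 2 * d" using md by simp
    have Uw: "U w = x + U (\<beta> t)" unfolding w_def by (rule UV)
    define z where "z = (1 / (2 * d)) *\<^sub>R w"
    have zE: "z \<in> E0" unfolding z_def by (rule subspace_scale[OF assms(5) wE])
    have zb: "z \<in> ball 0 1" unfolding z_def using nw assms(4) by (simp add: field_simps)
    have wz: "w = (2 * d) *\<^sub>R z" unfolding z_def using assms(4) by simp
    have "U w \<in> U ` ((\<lambda>z. (2 * d) *\<^sub>R z) ` (E0 \<inter> ball 0 1))"
      using zE zb wz by blast
    moreover have "- U (\<beta> t) \<in> K" unfolding K_def using tD by blast
    moreover have "x = - U (\<beta> t) + U w" using Uw by simp
    ultimately show "x \<in> {k + y | k y. k \<in> K \<and> y \<in> U ` ((\<lambda>z. (2 * d) *\<^sub>R z) ` (E0 \<inter> ball 0 1))}"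
      by blast
  qed
  ultimately show ?thesis by blast
qed

end
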